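(* The natural map from the monoid $B_n^+$ to $B_n$ is injective: if two positive words in the band generators represent the same element of $B_n$, then they are positively equivalent.
   Context: $B_n$ is the $n$-string braid group with band generators $a_{ts}$ ($n\ge t>s\ge1$), where $a_{ts}=(\sigma_{t-1}\cdots\sigma_{s+1})\sigma_s(\sigma_{s+1}^{-1}\cdots\sigma_{t-1}^{-1})$. The band relations are: (R1) $a_{ts}a_{rq}=a_{rq}a_{ts}$ if $(t-r)(t-q)(s-r)(s-q)>0$; (R2) $a_{ts}a_{sr}=a_{tr}a_{ts}=a_{sr}a_{tr}$ for $n\ge t>s>r\ge1$. A positive word is a word in positive powers of the $a_{ts}$. Two positive words are positively equivalent if one can be transformed into the other by a finite sequence of single direct applications of relations (R1), (R2) to subwords. $B_n^+$ is the monoid with generators $a_{ts}$ and relations (R1), (R2), i.e. positive words modulo positive equivalence. *)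

theory Defs
  imports Main
begin

text \<open>A letter (i, True) stands for sigma_i, (i, False) for sigma_i inverse, 1 <= i <= n-1.\<close>
type_synonym aletter = "nat \<times> bool"

definition valid_aletter :: "nat \<Rightarrow> aletter \<Rightarrow> bool" where
  "valid_aletter n x \<longleftrightarrow> 1 \<le> fst x \<and> fst x < n"

fun ainv :: "aletter \<Rightarrow> aletter" where
  "ainv (i, b) = (i, \<not> b)"

definition sg :: "nat \<Rightarrow> aletter" where "sg i = (i, True)"
definition sgi :: "nat \<Rightarrow> aletter" where "sgi i = (i, False)"

inductive braid_eq :: "nat \<Rightarrow> aletter list \<Rightarrow> aletter list \<Rightarrow> bool" for n where
  refl: "braid_eq n w w"
| sym: "braid_eq n u v \<Longrightarrow> braid_eq n v u"
| trans: "braid_eq n u v \<Longrightarrow> braid_eq n v w \<Longrightarrow> braid_eq n u w"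
| ctx: "braid_eq n u v \<Longrightarrow> braid_eq n (p @ u @ q) (p @ v @ q)"
| cancel: "valid_aletter n x \<Longrightarrow> braid_eq n [x, ainv x] []"
| comm: "1 \<le> i \<Longrightarrow> i < n \<Longrightarrow> 1 \<le> j \<Longrightarrow> j < n \<Longrightarrow> i + 2 \<le> j \<Longrightarrow>
           braid_eq n [sg i, sg j] [sg j, sg i]"
| braid: "1 \<le> i \<Longrightarrow> i + 1 < n \<Longrightarrow>
           braid_eq n [sg i, sg (i+1), sg i] [sg (i+1), sg i, sg (i+1)]"

text \<open>A band generator a_{ts} is represented by the pair (t, s); it is valid if n >= t > s >= 1.\<close>
definition valid_band :: "nat \<Rightarrow> nat \<times> nat \<Rightarrow> bool" where
  "valid_band n g \<longleftrightarrow> fst g \<le> n \<and> snd g < fst g \<and> 1 \<le> snd g"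

definition band_word :: "nat \<times> nat \<Rightarrow> aletter list" where
  "band_word g = (let t = fst g; s = snd g in
     map sg (rev [s+1..<t]) @ [sg s] @ map sgi [s+1..<t])"

definition band_to_artin :: "(nat \<times> nat) list \<Rightarrow> aletter list" where
  "band_to_artin w = concat (map band_word w)"

definition positive_word :: "nat \<Rightarrow> (nat \<times> nat) list \<Rightarrow> bool" where
  "positive_word n w \<longleftrightarrow> (\<forall>g\<in>set w. valid_band n g)"

inductive band_rel :: "nat \<Rightarrow> (nat \<times> nat) list \<Rightarrow> (nat \<times> nat) list \<Rightarrow> bool" for n where
  R1: "valid_band n (t, s) \<Longrightarrow> valid_band n (r, q) \<Longrightarrow>
       (int t - int r) * (int t - int q) * (int s - int r) * (int s - int q) > 0 \<Longrightarrow>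
       band_rel n [(t, s), (r, q)] [(r, q), (t, s)]"
| R2a: "t \<le> n \<Longrightarrow> s < t \<Longrightarrow> r < s \<Longrightarrow> 1 \<le> r \<Longrightarrow>
       band_rel n [(t, s), (s, r)] [(t, r), (t, s)]"
| R2b: "t \<le> n \<Longrightarrow> s < t \<Longrightarrow> r < s \<Longrightarrow> 1 \<le> r \<Longrightarrow>
       band_rel n [(t, r), (t, s)] [(s, r), (t, r)]"
| R2c: "t \<le> n \<Longrightarrow> s < t \<Longrightarrow> r < s \<Longrightarrow> 1 \<le> r \<Longrightarrow>
       band_rel n [(t, s), (s, r)] [(s, r), (t, r)]"
| sym: "band_rel n u v \<Longrightarrow> band_rel n v u"

definition pos_step :: "nat \<Rightarrow> (nat \<times> nat) list \<Rightarrow> (nat \<times> nat) list \<Rightarrow> bool" where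
  "pos_step n x y \<longleftrightarrow> (\<exists>p q l r. x = p @ l @ q \<and> y = p @ r @ q \<and> band_rel n l r)"

definition pos_equiv :: "nat \<Rightarrow> (nat \<times> nat) list \<Rightarrow> (nat \<times> nat) list \<Rightarrow> bool" where
  "pos_equiv n = (pos_step n)\<^sup>*\<^sup>*"

end

theory Submission
  imports Defs
begin


lemma pos_step_sym: "pos_step n x y \<Longrightarrow> pos_step n y x"
  unfolding pos_step_def by (blast intro: band_rel.sym)

lemma pe_refl[simp]: "pos_equiv n x x" by (simp add: pos_equiv_def)

lemma pe_trans[trans]: "pos_equiv n x y \<Longrightarrow> pos_equiv n y z \<Longrightarrow> pos_equiv n x z"
  unfolding pos_equiv_def by (rule rtranclp_trans)

lemma pe_sym: "pos_equiv n x y \<Longrightarrow> pos_equiv n y x"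
  unfolding pos_equiv_def
  by (induction rule: rtranclp_induct) (auto intro: pos_step_sym converse_rtranclp_into_rtranclp)

lemma pos_step_ctx: "pos_step n x y \<Longrightarrow> pos_step n (p @ x @ q) (p @ y @ q)"
  unfolding pos_step_def
  by (metis append.assoc)

lemma pe_ctx: "pos_equiv n x y \<Longrightarrow> pos_equiv n (p @ x @ q) (p @ y @ q)"
  unfolding pos_equiv_def
  by (induction rule: rtranclp_induct) (auto intro: pos_step_ctx rtranclp.rtrancl_into_rtrancl)

lemma pe_appl: "pos_equiv n x y \<Longrightarrow> pos_equiv n (p @ x) (p @ y)"
  using pe_ctx[of n x y p "[]"] by simp
lemma pe_appr: "pos_equiv n x y \<Longrightarrow> pos_equiv n (x @ q) (y @ q)"
  using pe_ctx[of n x y "[]" q] by simp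
lemma pe_cons: "pos_equiv n x y \<Longrightarrow> pos_equiv n (a # x) (a # y)"
  using pe_appl[of n x y "[a]"] by simp
lemma pe_app2: "pos_equiv n x x' \<Longrightarrow> pos_equiv n y y' \<Longrightarrow> pos_equiv n (x @ y) (x' @ y')"
  by (meson pe_appl pe_appr pe_trans)

lemma band_rel_len: "band_rel n l r \<Longrightarrow> length l = 2 \<and> length r = 2"
  by (induction rule: band_rel.induct) auto

lemma pe_length: "pos_equiv n x y \<Longrightarrow> length x = length y"
  unfolding pos_equiv_def
proof (induction rule: rtranclp_induct)
  case (step y z) then show ?case unfolding pos_step_def using band_rel_len by fastforce
qed simp

lemma band_rel_valid: "band_rel n l r \<Longrightarrow> (\<forall>g\<in>set l. valid_band n g) \<and> (\<forall>g\<in>set r. valid_band n g)"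
  by (induction rule: band_rel.induct) (auto simp: valid_band_def)

lemma pos_step_hd: "pos_step n (b # Y) u \<Longrightarrow> \<not> valid_band n b \<Longrightarrow> \<exists>Y'. u = b # Y'"
  unfolding pos_step_def
proof (elim exE conjE)
  fix p q l r assume h: "b # Y = p @ l @ q" "u = p @ r @ q" "band_rel n l r" "\<not> valid_band n b"
  show "\<exists>Y'. u = b # Y'"
  proof (cases p)
    case Nil
    then have "l \<noteq> []" using band_rel_len[OF h(3)] by auto
    then have "b \<in> set l" using h(1) Nil by (cases l) auto
    then show ?thesis using band_rel_valid[OF h(3)] h(4) by auto
  next
    case (Cons c p') then show ?thesis using h by auto
  qed
qed

lemma pe_hd_invalid: "pos_equiv n (b # Y) u \<Longrightarrow> \<not> valid_band n b \<Longrightarrow> \<exists>Y'. u = b # Y'"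
  unfolding pos_equiv_def
proof (induction rule: rtranclp_induct)
  case (step y z) then show ?case using pos_step_hd by blast
qed simp

lemma pe_rel: "band_rel n l r \<Longrightarrow> pos_equiv n l r"
  unfolding pos_equiv_def pos_step_def
  by (rule r_into_rtranclp) (metis append.left_neutral append.right_neutral)

lemma tri1: "R < Q \<Longrightarrow> Q < P \<Longrightarrow> 1 \<le> R \<Longrightarrow> P \<le> n \<Longrightarrow> pos_equiv n [(P,Q),(Q,R)] [(P,R),(P,Q)]"
  by (rule pe_rel) (rule band_rel.R2a; auto)
lemma tri2: "R < Q \<Longrightarrow> Q < P \<Longrightarrow> 1 \<le> R \<Longrightarrow> P \<le> n \<Longrightarrow> pos_equiv n [(P,Q),(Q,R)] [(Q,R),(P,R)]"
  by (rule pe_rel) (rule band_rel.R2c; auto)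
lemma tri3: "R < Q \<Longrightarrow> Q < P \<Longrightarrow> 1 \<le> R \<Longrightarrow> P \<le> n \<Longrightarrow> pos_equiv n [(P,R),(P,Q)] [(Q,R),(P,R)]"
  by (rule pe_rel) (rule band_rel.R2b; auto)

definition disj :: "nat \<times> nat \<Rightarrow> nat \<times> nat \<Rightarrow> bool" where
"disj x y = (fst x \<noteq> fst y \<and> fst x \<noteq> snd y \<and> snd x \<noteq> fst y \<and> snd x \<noteq> snd y \<and>
   \<not> (fst y < fst x \<and> snd x < fst y \<and> snd y < snd x) \<and> \<not> (fst x < fst y \<and> snd y < fst x \<and> snd x < snd y))"

lemma sg4: fixes a b c d :: int shows
  "(a < 0 \<and> b < 0 \<and> c < 0 \<and> d < 0) \<or> (a > 0 \<and> b > 0 \<and> c > 0 \<and> d > 0) \<or>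
   (a < 0 \<and> b > 0 \<and> c < 0 \<and> d > 0) \<or> (a > 0 \<and> b > 0 \<and> c < 0 \<and> d < 0) \<Longrightarrow> a * b * c * d > 0"
proof -
  assume h: "(a < 0 \<and> b < 0 \<and> c < 0 \<and> d < 0) \<or> (a > 0 \<and> b > 0 \<and> c > 0 \<and> d > 0) \<or>
   (a < 0 \<and> b > 0 \<and> c < 0 \<and> d > 0) \<or> (a > 0 \<and> b > 0 \<and> c < 0 \<and> d < 0)"
  have e: "a * b * c * d = (a * b) * (c * d)" by (simp add: mult.assoc)
  show ?thesis unfolding e using h
    by (auto intro: mult_pos_pos mult_neg_neg mult_pos_neg mult_neg_pos)
qed

lemma disj_prod: assumes "s < t" "q < r" "disj (t,s) (r,q)"
  shows "(int t - int r) * (int t - int q) * (int s - int r) * (int s - int q) > 0"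
proof -
  have c: "t \<noteq> r" "t \<noteq> q" "s \<noteq> r" "s \<noteq> q" using assms(3) by (auto simp: disj_def)
  have nc: "\<not> (r < t \<and> s < r \<and> q < s)" "\<not> (t < r \<and> q < t \<and> s < q)" using assms(3) by (auto simp: disj_def)
  consider "t < q" | "r < s" | "q < s \<and> t < r" | "s < q \<and> r < t" using c nc assms(1,2) by linarith
  then show ?thesis
    by (rule sg4) (use assms c in auto)
qed

lemma comm: "valid_band n (t,s) \<Longrightarrow> valid_band n (r,q) \<Longrightarrow> disj (t,s) (r,q) \<Longrightarrow> pos_equiv n [(t,s), (r,q)] [(r,q), (t,s)]"
  apply (rule pe_rel)
  apply (rule band_rel.R1)
  apply (auto intro!: disj_prod simp: valid_band_def)
  done


type_synonym ch = "nat \<times> nat"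

definition cpl :: "ch \<Rightarrow> ch \<Rightarrow> ch list" where
"cpl x y = (let t = fst x; s = snd x; r = fst y; q = snd y in
   if x = y then []
   else if t = r then (if q < s then [(s,q)] else [(t,q)])
   else if s = q then (if r < t then [(t,r)] else [(r,s)])
   else if s = r then [y]
   else if t = q then [(r,s)]
   else if r < t \<and> s < r \<and> q < s then [(t,r),(s,q)]
   else if t < r \<and> q < t \<and> s < q then [(r,s),(t,q)]
   else [y])"

lemma cross_rel: "q < s \<Longrightarrow> s < r \<Longrightarrow> r < t \<Longrightarrow> 1 \<le> q \<Longrightarrow> t \<le> n \<Longrightarrow>
  pos_equiv n [(t,s),(t,r),(s,q)] [(r,q),(t,q),(r,s)]"
proof -
  assume h: "q < s" "s < r" "r < t" "1 \<le> q" "t \<le> n"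
  have "pos_equiv n [(t,s),(t,r),(s,q)] [(t,r),(r,s),(s,q)]"
    using pe_appr[OF pe_sym[OF tri1[of s r t n]], of "[(s,q)]"] h by simp
  also have "pos_equiv n ... [(t,r),(r,q),(r,s)]"
    using pe_appl[OF tri1[of q s r n], of "[(t,r)]"] h by simp
  also have "pos_equiv n ... [(r,q),(t,q),(r,s)]"
    using pe_appr[OF tri2[of q r t n], of "[(r,s)]"] h by simp
  finally show ?thesis .
qed

lemma cpl_valid: "valid_band n x \<Longrightarrow> valid_band n y \<Longrightarrow> g \<in> set (cpl x y) \<Longrightarrow> valid_band n g"
  by (cases x; cases y) (auto simp: cpl_def Let_def valid_band_def split: if_splits)

lemma cpl_rel: "valid_band n x \<Longrightarrow> valid_band n y \<Longrightarrow> pos_equiv n (x # cpl x y) (y # cpl y x)"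
proof (cases x; cases y)
  fix t s r q assume v: "valid_band n x" "valid_band n y" and xy: "x = (t,s)" "y = (r,q)"
  have v': "s < t" "q < r" "1 \<le> s" "1 \<le> q" "t \<le> n" "r \<le> n" using v xy by (auto simp: valid_band_def)
  show ?thesis unfolding xy
    using v' apply (simp add: cpl_def Let_def split: if_splits)
    apply (auto intro: tri1 tri2 tri3 pe_sym[OF tri1] pe_sym[OF tri2] pe_sym[OF tri3] cross_rel pe_sym[OF cross_rel])
    apply (auto intro!: comm simp: disj_def valid_band_def)
    done
qed


lemma prod_disj: assumes "s < t" "q < r"
  "(int t - int r) * (int t - int q) * (int s - int r) * (int s - int q) > 0"
  shows "disj (t,s) (r,q)"
proof -
  have nz: "t \<noteq> r" "t \<noteq> q" "s \<noteq> r" "s \<noteq> q" using assms(3) by auto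
  have e: "(int t - int r) * (int t - int q) * (int s - int r) * (int s - int q)
     = ((int t - int r) * (int t - int q)) * ((int s - int r) * (int s - int q))" by (simp add: mult.assoc)
  have n1: "\<not> (r < t \<and> s < r \<and> q < s)"
  proof
    assume c: "r < t \<and> s < r \<and> q < s"
    have A: "(int t - int r) * (int t - int q) > 0" using c by (auto intro: mult_pos_pos)
    have B: "(int s - int r) * (int s - int q) < 0" using c by (auto intro: mult_neg_pos)
    have "((int t - int r) * (int t - int q)) * ((int s - int r) * (int s - int q)) < 0"
      using mult_pos_neg[OF A B] .
    then show False using assms(3) unfolding e by linarith
  qed
  have n2: "\<not> (t < r \<and> q < t \<and> s < q)"
  proof
    assume c: "t < r \<and> q < t \<and> s < q"
    have A: "(int t - int r) * (int t - int q) < 0" using c by (auto intro: mult_neg_pos)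
    have B: "(int s - int r) * (int s - int q) > 0" using c by (auto intro: mult_neg_neg)
    have "((int t - int r) * (int t - int q)) * ((int s - int r) * (int s - int q)) < 0"
      using mult_neg_pos[OF A B] .
    then show False using assms(3) unfolding e by linarith
  qed
  show ?thesis using nz n1 n2 by (simp add: disj_def)
qed

lemma cpl_disj: "disj x y \<Longrightarrow> cpl x y = [y]"
  by (cases x; cases y) (auto simp: cpl_def disj_def Let_def)

lemma disj_sym: "disj x y \<Longrightarrow> disj y x"
  by (auto simp: disj_def)

lemma band_rel_cpl: "band_rel n l r \<Longrightarrow> \<exists>a c a' d. l = [a,c] \<and> r = [a',d] \<and> a \<noteq> a' \<and>
   cpl a a' = [c] \<and> cpl a' a = [d] \<and> valid_band n a \<and> valid_band n a' \<and> valid_band n c \<and> valid_band n d"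
proof (induction rule: band_rel.induct)
  case (R1 t s r q)
  have d: "disj (t,s) (r,q)" using R1 by (intro prod_disj) (auto simp: valid_band_def)
  then have "(t,s) \<noteq> (r,q)" by (auto simp: disj_def)
  have "cpl (t,s) (r,q) = [(r,q)]" "cpl (r,q) (t,s) = [(t,s)]" using d cpl_disj disj_sym by auto
  then show ?case using R1 \<open>(t,s) \<noteq> (r,q)\<close> by auto
next
  case (R2a t s r) then show ?case by (auto simp: cpl_def Let_def valid_band_def)
next
  case (R2b t s r) then show ?case by (auto simp: cpl_def Let_def valid_band_def)
next
  case (R2c t s r) then show ?case by (auto simp: cpl_def Let_def valid_band_def)
next
  case (sym u v) then show ?case by blast
qed

fun rv :: "nat \<Rightarrow> ch list \<Rightarrow> ch list \<Rightarrow> (ch list \<times> ch list) option" where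
  "rv k [] v = Some ([], v)"
| "rv k (s#u) [] = Some (s#u, [])"
| "rv 0 (s#u) (t#v) = None"
| "rv (Suc k) (s#u) (t#v) = (case rv k u (cpl s t) of None \<Rightarrow> None
     | Some (u1, x1) \<Rightarrow> (case rv k (cpl t s @ u1) v of None \<Rightarrow> None
     | Some (u2, v2) \<Rightarrow> Some (u2, x1 @ v2)))"

lemma rv_suc: "rv k u v = Some r \<Longrightarrow> rv (Suc k) u v = Some r"
proof (induction k u v arbitrary: r rule: rv.induct)
  case (4 k s u t v)
  then show ?case by (auto split: option.splits)
qed auto

lemma rv_mono: assumes "rv k u v = Some r" "k \<le> k'" shows "rv k' u v = Some r"
  using assms(2) by (induction rule: dec_induct) (auto intro: rv_suc assms(1))

lemma rv_det: "rv k u v = Some r \<Longrightarrow> rv k' u v = Some r' \<Longrightarrow> r = r'"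
  using rv_mono[of k u v r "max k k'"] rv_mono[of k' u v r' "max k k'"] by auto

lemma rv_sound: "rv k u v = Some (u', v') \<Longrightarrow> positive_word n u \<Longrightarrow> positive_word n v \<Longrightarrow>
   positive_word n u' \<and> positive_word n v' \<and> pos_equiv n (u @ v') (v @ u')"
proof (induction k u v arbitrary: u' v' rule: rv.induct)
  case (4 k s u t v)
  note pr = "4.prems"
  obtain u1 x1 where r1: "rv k u (cpl s t) = Some (u1, x1)"
    using pr(1) by (cases "rv k u (cpl s t)") auto
  obtain u2 v2 where r2: "rv k (cpl t s @ u1) v = Some (u2, v2)"
    using pr(1) r1 by (cases "rv k (cpl t s @ u1) v") auto
  have res: "u' = u2" "v' = x1 @ v2" using pr(1) r1 r2 by auto
  have vs: "valid_band n s" "valid_band n t" "positive_word n u" "positive_word n v"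
    using pr(2,3) by (auto simp: positive_word_def)
  have pc: "positive_word n (cpl s t)" "positive_word n (cpl t s)"
    using cpl_valid vs(1,2) unfolding positive_word_def by blast+
  have i1: "positive_word n u1 \<and> positive_word n x1 \<and> pos_equiv n (u @ x1) (cpl s t @ u1)"
    by (rule "4.IH"(1)[OF r1 vs(3) pc(1)])
  have pu: "positive_word n (cpl t s @ u1)" using pc(2) i1 by (auto simp: positive_word_def)
  have i2: "positive_word n u2 \<and> positive_word n v2 \<and> pos_equiv n (cpl t s @ u1 @ v2) (v @ u2)"
    using "4.IH"(2)[OF r1 HOL.refl r2 pu vs(4)] by simp
  have "pos_equiv n ((s # u) @ x1 @ v2) (s # cpl s t @ u1 @ v2)"
  proof -
    have e1: "pos_equiv n (s # u @ x1) (s # cpl s t @ u1)" using pe_cons i1 by blast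
    show ?thesis using pe_appr[OF e1, of v2] by simp
  qed
  also have "pos_equiv n ... (t # cpl t s @ u1 @ v2)"
    using pe_appr[OF cpl_rel[OF vs(1,2)], of "u1 @ v2"] by simp
  also have "pos_equiv n ... ((t # v) @ u2)"
    using pe_cons i2 by fastforce
  finally have "pos_equiv n ((s # u) @ x1 @ v2) ((t # v) @ u2)" .
  moreover have "positive_word n (x1 @ v2)" using i1 i2 by (auto simp: positive_word_def)
  ultimately show ?case using res i2 by simp
qed (auto simp: positive_word_def)


definition gm :: "(nat \<Rightarrow> nat) \<Rightarrow> ch \<Rightarrow> ch" where "gm g x = (g (fst x), g (snd x))"

definition okS :: "nat set \<Rightarrow> ch list \<Rightarrow> bool" where
  "okS S w = (\<forall>x\<in>set w. fst x \<in> S \<and> snd x \<in> S \<and> snd x < fst x)"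

definition smo :: "nat set \<Rightarrow> (nat \<Rightarrow> nat) \<Rightarrow> bool" where
  "smo S g = (\<forall>a\<in>S. \<forall>b\<in>S. a < b \<longrightarrow> g a < g b)"

lemma smo_less: "smo S g \<Longrightarrow> a \<in> S \<Longrightarrow> b \<in> S \<Longrightarrow> (g a < g b) = (a < b)"
  unfolding smo_def by (metis less_asym linorder_neqE_nat)
lemma smo_eq: "smo S g \<Longrightarrow> a \<in> S \<Longrightarrow> b \<in> S \<Longrightarrow> (g a = g b) = (a = b)"
  unfolding smo_def by (metis less_irrefl linorder_neqE_nat)

lemma cpl_relab: assumes "smo S g" "okS S [x, y]"
  shows "cpl (gm g x) (gm g y) = map (gm g) (cpl x y) \<and> okS S (cpl x y)"
proof (cases x; cases y)
  fix t s r q assume xy: "x = (t,s)" "y = (r,q)"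
  have m: "t \<in> S" "s \<in> S" "r \<in> S" "q \<in> S" "s < t" "q < r" using assms(2) xy by (auto simp: okS_def)
  note L = smo_less[OF assms(1)] smo_eq[OF assms(1)]
  have e: "(g t < g r) = (t < r)" "(g r < g t) = (r < t)" "(g t < g q) = (t < q)" "(g q < g t) = (q < t)"
     "(g s < g r) = (s < r)" "(g r < g s) = (r < s)" "(g s < g q) = (s < q)" "(g q < g s) = (q < s)"
     "(g t = g r) = (t = r)" "(g t = g q) = (t = q)" "(g s = g r) = (s = r)" "(g s = g q) = (s = q)"
     "(g r = g t) = (r = t)" "(g q = g t) = (q = t)" "(g r = g s) = (r = s)" "(g q = g s) = (q = s)"
    using L m by blast+
  show ?thesis unfolding xy using m
    by (simp add: cpl_def Let_def gm_def e okS_def)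
qed

lemma okS_append: "okS S (u @ v) = (okS S u \<and> okS S v)"
  by (auto simp: okS_def)
lemma okS_cons: "okS S (x # v) = (okS S [x] \<and> okS S v)"
  by (auto simp: okS_def)

lemma rv_relab: "smo S g \<Longrightarrow> okS S u \<Longrightarrow> okS S v \<Longrightarrow>
  rv k (map (gm g) u) (map (gm g) v) = map_option (map_prod (map (gm g)) (map (gm g))) (rv k u v) \<and>
  (\<forall>u' v'. rv k u v = Some (u', v') \<longrightarrow> okS S u' \<and> okS S v')"
proof (induction k u v rule: rv.induct)
  case (4 k s u t v)
  have o: "okS S [s, t]" "okS S u" "okS S v" using "4.prems" by (auto simp: okS_def)
  have c1: "cpl (gm g s) (gm g t) = map (gm g) (cpl s t)" "okS S (cpl s t)"
    using cpl_relab[OF "4.prems"(1) o(1)] by auto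
  have o2: "okS S [t, s]" using o(1) by (auto simp: okS_def)
  have c2: "cpl (gm g t) (gm g s) = map (gm g) (cpl t s)" "okS S (cpl t s)"
    using cpl_relab[OF "4.prems"(1) o2] by auto
  note IH1 = "4.IH"(1)[OF "4.prems"(1) o(2) c1(2)]
  show ?case
  proof (cases "rv k u (cpl s t)")
    case None
    then show ?thesis using IH1 c1 by simp
  next
    case (Some p)
    obtain u1 x1 where p: "p = (u1, x1)" by (cases p)
    have r1: "rv k u (cpl s t) = Some (u1, x1)" using Some p by simp
    have ok1: "okS S u1" "okS S x1" using IH1 r1 by auto
    have ok3: "okS S (cpl t s @ u1)" using c2(2) ok1 by (simp add: okS_append)
    note IH2 = "4.IH"(2)[OF r1 HOL.refl "4.prems"(1) ok3 o(3)]
    have m1: "rv k (map (gm g) u) (map (gm g) (cpl s t)) = Some (map (gm g) u1, map (gm g) x1)"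
      using IH1 r1 by simp
    show ?thesis
    proof (cases "rv k (cpl t s @ u1) v")
      case None
      then show ?thesis using IH2 m1 r1 c1 c2 by simp
    next
      case (Some p2)
      obtain u2 v2 where p2: "p2 = (u2, v2)" by (cases p2)
      have r2: "rv k (cpl t s @ u1) v = Some (u2, v2)" using Some p2 by simp
      have m2: "rv k (map (gm g) (cpl t s) @ map (gm g) u1) (map (gm g) v) = Some (map (gm g) u2, map (gm g) v2)"
        using IH2 r2 by simp
      have ok2: "okS S u2" "okS S v2" using IH2 r2 by auto
      show ?thesis using m1 m2 r1 r2 c1 c2 ok1 ok2 by (simp add: okS_append)
    qed
  qed
qed auto

definition cube_ok :: "ch \<Rightarrow> ch \<Rightarrow> ch \<Rightarrow> bool" where
"cube_ok a a' b = (case rv 5 (cpl a' a) (cpl a' b) of None \<Rightarrow> False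
   | Some (U, V) \<Rightarrow> (case rv 5 (cpl a a' @ V) (cpl a b) of None \<Rightarrow> False
   | Some (Q, R) \<Rightarrow> R = [] \<and> rv 5 (cpl b a' @ U) (cpl b a @ Q) = Some ([], [])))"

lemma cube_okE: "cube_ok a a' b = (\<exists>U V Q. rv 5 (cpl a' a) (cpl a' b) = Some (U, V) \<and>
   rv 5 (cpl a a' @ V) (cpl a b) = Some (Q, []) \<and> rv 5 (cpl b a' @ U) (cpl b a @ Q) = Some ([], []))"
  unfolding cube_ok_def by (auto split: option.splits)

definition ch6 :: "ch list" where "ch6 = concat (map (\<lambda>t. map (\<lambda>s. (t,s)) [1..<t]) [1..<7])"

definition cond3 :: "ch \<Rightarrow> ch \<Rightarrow> ch \<Rightarrow> bool" where
"cond3 a a' b = (a \<noteq> a' \<and> length (cpl a a') = 1 \<and> b \<noteq> a \<and> b \<noteq> a')"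

lemma chk: "list_all (\<lambda>a. list_all (\<lambda>a'. list_all (\<lambda>b. \<not> cond3 a a' b \<or> cube_ok a a' b) ch6) ch6) ch6"
  by code_simp

lemma mem_ch6: "1 \<le> s \<Longrightarrow> s < t \<Longrightarrow> t \<le> 6 \<Longrightarrow> (t,s) \<in> set ch6"
  unfolding ch6_def by (auto intro!: bexI[where x=t])

lemma map_gm_nil: "(map (gm g) x = []) = (x = [])" by simp

lemma cube_relab: assumes "smo S g" "okS S [a, a', b]" "cube_ok (gm g a) (gm g a') (gm g b)"
  shows "cube_ok a a' b"
proof -
  have o: "okS S [a]" "okS S [a']" "okS S [b]" using assms(2) by (auto simp: okS_def)
  have oo: "\<And>x y. okS S [x] \<Longrightarrow> okS S [y] \<Longrightarrow> okS S [x, y]" by (auto simp: okS_def)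
  note C = cpl_relab[OF assms(1) oo]
  have c: "cpl (gm g a') (gm g a) = map (gm g) (cpl a' a)" "okS S (cpl a' a)"
          "cpl (gm g a') (gm g b) = map (gm g) (cpl a' b)" "okS S (cpl a' b)"
          "cpl (gm g a) (gm g a') = map (gm g) (cpl a a')" "okS S (cpl a a')"
          "cpl (gm g a) (gm g b) = map (gm g) (cpl a b)" "okS S (cpl a b)"
          "cpl (gm g b) (gm g a') = map (gm g) (cpl b a')" "okS S (cpl b a')"
          "cpl (gm g b) (gm g a) = map (gm g) (cpl b a)" "okS S (cpl b a)"
    using C o by blast+
  obtain U V Q where h: "rv 5 (cpl (gm g a') (gm g a)) (cpl (gm g a') (gm g b)) = Some (U, V)"
    "rv 5 (cpl (gm g a) (gm g a') @ V) (cpl (gm g a) (gm g b)) = Some (Q, [])"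
    "rv 5 (cpl (gm g b) (gm g a') @ U) (cpl (gm g b) (gm g a) @ Q) = Some ([], [])"
    using assms(3) cube_okE by blast
  note R = rv_relab[OF assms(1)]
  from R[OF c(2) c(4), of 5] h(1) c(1,3) obtain U0 V0 where
    h1: "rv 5 (cpl a' a) (cpl a' b) = Some (U0, V0)" "U = map (gm g) U0" "V = map (gm g) V0"
    "okS S U0" "okS S V0" by (cases "rv 5 (cpl a' a) (cpl a' b)") auto
  have ok2: "okS S (cpl a a' @ V0)" using c h1 by (simp add: okS_append)
  from R[OF ok2 c(8), of 5] h(2) c(5,7) h1(3) obtain Q0 R0 where
    h2: "rv 5 (cpl a a' @ V0) (cpl a b) = Some (Q0, R0)" "Q = map (gm g) Q0" "[] = map (gm g) R0"
    "okS S Q0" by (cases "rv 5 (cpl a a' @ V0) (cpl a b)") auto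
  have ok3: "okS S (cpl b a' @ U0)" "okS S (cpl b a @ Q0)" using c h1 h2 by (simp_all add: okS_append)
  from R[OF ok3, of 5] h(3) c(9,11) h1(2) h2(2) obtain X0 Y0 where
    h3: "rv 5 (cpl b a' @ U0) (cpl b a @ Q0) = Some (X0, Y0)" "[] = map (gm g) X0" "[] = map (gm g) Y0"
    by (cases "rv 5 (cpl b a' @ U0) (cpl b a @ Q0)") auto
  show ?thesis unfolding cube_okE using h1 h2 h3 by auto
qed


lemma cube_all: assumes "valid_band n a" "valid_band n a'" "valid_band n b" "cond3 a a' b"
  shows "cube_ok a a' b"
proof -
  define S where "S = set [fst a, snd a, fst a', snd a', fst b, snd b]"
  define g where "g x = card {y\<in>S. y \<le> x}" for x
  have fS: "finite S" by (simp add: S_def)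
  have cS: "card S \<le> 6" unfolding S_def using card_length[of "[fst a, snd a, fst a', snd a', fst b, snd b]"] by simp
  have smo: "smo S g" unfolding smo_def g_def
  proof (intro ballI impI)
    fix x y assume xy: "x \<in> S" "y \<in> S" "x < y"
    have "y \<in> {z\<in>S. z \<le> y}" "y \<notin> {z\<in>S. z \<le> x}" using xy by auto
    then have ne: "{z\<in>S. z \<le> x} \<noteq> {z\<in>S. z \<le> y}" by blast
    have "{z\<in>S. z \<le> x} \<subseteq> {z\<in>S. z \<le> y}" using xy by auto
    then have "{z\<in>S. z \<le> x} \<subset> {z\<in>S. z \<le> y}" using ne by blast
    then show "card {z\<in>S. z \<le> x} < card {z\<in>S. z \<le> y}" using fS by (intro psubset_card_mono) auto
  qed
  have gb: "x \<in> S \<Longrightarrow> 1 \<le> g x \<and> g x \<le> 6" for x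
  proof -
    assume x: "x \<in> S"
    have "{y\<in>S. y \<le> x} \<noteq> {}" using x by auto
    then have "1 \<le> g x" unfolding g_def using fS by (simp add: Suc_leI card_gt_0_iff)
    moreover have "g x \<le> card S" unfolding g_def using fS by (intro card_mono) auto
    ultimately show ?thesis using cS by simp
  qed
  have okS: "okS S [a, a', b]" using assms(1-3) by (auto simp: okS_def S_def valid_band_def)
  have in6: "x \<in> {a, a', b} \<Longrightarrow> gm g x \<in> set ch6" for x
  proof -
    assume x: "x \<in> {a, a', b}"
    then have m: "fst x \<in> S" "snd x \<in> S" "snd x < fst x" using okS by (auto simp: okS_def)
    have "g (snd x) < g (fst x)" using smo_less[OF smo m(2) m(1)] m(3) by simp
    then show ?thesis unfolding gm_def using gb[OF m(1)] gb[OF m(2)] by (intro mem_ch6) auto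
  qed
  have oo: "okS S [a, a']" "okS S [a, b]" "okS S [a', b]" using okS by (auto simp: okS_def)
  have inj: "gm g x = gm g y \<longleftrightarrow> x = y" if "okS S [x, y]" for x y
    using that smo_eq[OF smo] unfolding gm_def okS_def by (cases x; cases y) auto
  have c3: "cond3 (gm g a) (gm g a') (gm g b)"
    using assms(4) cpl_relab[OF smo oo(1)] inj[OF oo(1)] inj[OF oo(2)] inj[OF oo(3)]
    unfolding cond3_def by auto
  have "cube_ok (gm g a) (gm g a') (gm g b)"
    using chk in6 c3 unfolding list_all_iff by blast
  then show ?thesis by (rule cube_relab[OF smo okS])
qed


definition PP :: "nat \<Rightarrow> nat \<Rightarrow> bool" where
"PP n m = (\<forall>a b X Y. length X = m \<longrightarrow> pos_equiv n (a # X) (b # Y) \<longrightarrow>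
   (a = b \<longrightarrow> pos_equiv n X Y) \<and>
   (a \<noteq> b \<longrightarrow> (\<exists>W. pos_equiv n X (cpl a b @ W) \<and> pos_equiv n Y (cpl b a @ W))))"

lemma rv_nil2: "rv k u [] = Some (u, [])" by (cases u) auto

lemma cpl_self: "cpl x x = []" by (simp add: cpl_def)

lemma claim_aux: assumes P: "\<forall>m'<m. PP n m'"
  shows "\<forall>U V X Y k. length (U @ X) = L \<longrightarrow> L \<le> m \<longrightarrow> L \<le> k \<longrightarrow> pos_equiv n (U @ X) (V @ Y) \<longrightarrow>
    (\<exists>U' V' W. rv k U V = Some (U', V') \<and> pos_equiv n X (V' @ W) \<and> pos_equiv n Y (U' @ W))"
proof (induction L rule: less_induct)
  case (less L)
  show ?case
  proof (intro allI impI)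
    fix U V X Y k
    assume h: "length (U @ X) = L" "L \<le> m" "L \<le> k" "pos_equiv n (U @ X) (V @ Y)"
    show "\<exists>U' V' W. rv k U V = Some (U', V') \<and> pos_equiv n X (V' @ W) \<and> pos_equiv n Y (U' @ W)"
    proof (cases U)
      case Nil
      then show ?thesis using h(4) by (intro exI[of _ "[]"] exI[of _ V] exI[of _ Y]) auto
    next
      case (Cons s U1)
      show ?thesis
      proof (cases V)
        case Nil
        then show ?thesis using h(4) pe_sym by (intro exI[of _ U] exI[of _ "[]"] exI[of _ X]) (auto simp: rv_nil2)
      next
        case (Cons t V1)
        obtain k' where k: "k = Suc k'" using h(1,3) \<open>U = s # U1\<close> by (cases k) auto
        have lt: "length (U1 @ X) < L" "length (U1 @ X) < m" using h(1,2) \<open>U = s # U1\<close> by auto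
        have PL: "PP n (length (U1 @ X))" using P lt(2) by blast
        have eq: "pos_equiv n (s # (U1 @ X)) (t # (V1 @ Y))" using h(4) \<open>U = s # U1\<close> \<open>V = t # V1\<close> by simp
        have lenV: "length (V1 @ Y) = length (U1 @ X)" using pe_length[OF eq] by simp
        note IH = less.IH[OF lt(1), rule_format]
        have lk: "length (U1 @ X) \<le> k'" "length (U1 @ X) \<le> m" using h k \<open>U = s # U1\<close> by auto
        show ?thesis
        proof (cases "s = t")
          case True
          then have e1: "pos_equiv n (U1 @ X) (V1 @ Y)" using PL eq unfolding PP_def by blast
          obtain u2 v2 W where r: "rv k' U1 V1 = Some (u2, v2)" "pos_equiv n X (v2 @ W)" "pos_equiv n Y (u2 @ W)"
            using IH[OF HOL.refl lk(2) lk(1) e1] by blast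
          have "rv k U V = Some (u2, v2)" using r(1) True k \<open>U = s # U1\<close> \<open>V = t # V1\<close>
            by (simp add: cpl_self rv_nil2)
          then show ?thesis using r by blast
        next
          case False
          then obtain W0 where w0: "pos_equiv n (U1 @ X) (cpl s t @ W0)" "pos_equiv n (V1 @ Y) (cpl t s @ W0)"
            using PL eq unfolding PP_def by blast
          obtain u1 x1 W1 where r1: "rv k' U1 (cpl s t) = Some (u1, x1)" "pos_equiv n X (x1 @ W1)"
              "pos_equiv n W0 (u1 @ W1)"
            using IH[OF HOL.refl lk(2) lk(1) w0(1)] by blast
          have e2: "pos_equiv n ((cpl t s @ u1) @ W1) (V1 @ Y)"
            using pe_trans[OF w0(2) pe_appl[OF r1(3), of "cpl t s"]] pe_sym by simp
          have l2: "length ((cpl t s @ u1) @ W1) = length (U1 @ X)"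
            using pe_length[OF e2] lenV by simp
          obtain u2 v2 W2 where r2: "rv k' (cpl t s @ u1) V1 = Some (u2, v2)" "pos_equiv n W1 (v2 @ W2)"
              "pos_equiv n Y (u2 @ W2)"
            using IH[OF l2 lk(2) lk(1) e2] by blast
          have "rv k U V = Some (u2, x1 @ v2)" using r1(1) r2(1) k \<open>U = s # U1\<close> \<open>V = t # V1\<close> by simp
          moreover have "pos_equiv n X ((x1 @ v2) @ W2)"
            using pe_trans[OF r1(2) pe_appl[OF r2(2), of x1]] by simp
          ultimately show ?thesis using r2(3) by blast
        qed
      qed
    qed
  qed
qed

lemma claim: "\<forall>m'<m. PP n m' \<Longrightarrow> length (U @ X) \<le> m \<Longrightarrow> length (U @ X) \<le> k \<Longrightarrow>
  pos_equiv n (U @ X) (V @ Y) \<Longrightarrow>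
  \<exists>U' V' W. rv k U V = Some (U', V') \<and> pos_equiv n X (V' @ W) \<and> pos_equiv n Y (U' @ W)"
  using claim_aux by blast


definition CC :: "nat \<Rightarrow> ch \<Rightarrow> ch list \<Rightarrow> ch \<Rightarrow> ch list \<Rightarrow> bool" where
"CC n a X b Y = ((a = b \<longrightarrow> pos_equiv n X Y) \<and>
   (a \<noteq> b \<longrightarrow> (\<exists>W. pos_equiv n X (cpl a b @ W) \<and> pos_equiv n Y (cpl b a @ W))))"

lemma pos_step_pe: "pos_step n x y \<Longrightarrow> pos_equiv n x y"
  unfolding pos_equiv_def by auto

lemma step_case: assumes P: "\<forall>m'<m. PP n m'"
  and st: "pos_step n (a # X) u'" and rest: "pos_equiv n u' (b # Y)"
  and len: "length X = m"
  and IH: "\<forall>a' X'. u' = a' # X' \<longrightarrow> length X' = m \<longrightarrow> CC n a' X' b Y"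
  shows "CC n a X b Y"
proof -
  obtain p q l r where s: "a # X = p @ l @ q" "u' = p @ r @ q" "band_rel n l r"
    using st unfolding pos_step_def by blast
  show ?thesis
  proof (cases p)
    case (Cons c p')
    then have X: "X = p' @ l @ q" "u' = a # (p' @ r @ q)" using s by auto
    have lenX': "length (p' @ r @ q) = m" using len X band_rel_len[OF s(3)] by simp
    have C: "CC n a (p' @ r @ q) b Y" using IH X(2) lenX' by blast
    have e: "pos_equiv n X (p' @ r @ q)" using X(1) pe_ctx[OF pe_rel[OF s(3)]] by simp
    show ?thesis using C e pe_trans unfolding CC_def by blast
  next
    case Nil
    obtain a0 c a' d where br: "l = [a0, c]" "r = [a', d]" "a0 \<noteq> a'" "cpl a0 a' = [c]" "cpl a' a0 = [d]"
      "valid_band n a0" "valid_band n a'" "valid_band n c" "valid_band n d"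
      using band_rel_cpl[OF s(3)] by blast
    have aX: "a0 = a" "X = c # q" "u' = a' # d # q" using s(1,2) Nil br(1,2) by auto
    have lenq: "length (d # q) = m" using len aX by simp
    have C: "CC n a' (d # q) b Y" using IH aX(3) lenq by blast
    have aa': "a \<noteq> a'" "cpl a a' = [c]" "cpl a' a = [d]" "valid_band n a" using br aX(1) by auto
    show ?thesis
    proof (cases "a' = b")
      case True
      then have "pos_equiv n (d # q) Y" using C unfolding CC_def by blast
      then show ?thesis unfolding CC_def using True aa' aX(2) pe_sym
        by (intro conjI impI; (simp; fail)?) (rule exI[of _ q], auto)
    next
      case False
      then obtain W where W: "pos_equiv n (d # q) (cpl a' b @ W)" "pos_equiv n Y (cpl b a' @ W)"
        using C unfolding CC_def by blast
      have lq: "length q < m" using lenq by simp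
      show ?thesis
      proof (cases "a = b")
        case True
        have pp: "PP n (length q)" using P lq by blast
        have dd: "pos_equiv n (d # q) (d # W)" using W(1) aa'(3) True by simp
        have "pos_equiv n q W" using pp[unfolded PP_def, rule_format, OF HOL.refl dd] by simp
        then have "pos_equiv n Y (c # q)" using W(2) True aa'(2) pe_sym pe_cons pe_trans by (metis append_Cons append_Nil)
        then show ?thesis unfolding CC_def using True aX(2) pe_sym by auto
      next
        case False
        have vb: "valid_band n b"
        proof (rule ccontr)
          assume "\<not> valid_band n b"
          then obtain Y' where "a' # d # q = b # Y'" using pe_hd_invalid[OF pe_sym[OF rest[unfolded aX(3)]]] by blast
          then show False using \<open>a' \<noteq> b\<close> by simp
        qed
        have c3: "cond3 a a' b" unfolding cond3_def using aa' False \<open>a' \<noteq> b\<close> by auto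
        obtain U0 V0 Q where cb: "rv 5 (cpl a' a) (cpl a' b) = Some (U0, V0)"
          "rv 5 (cpl a a' @ V0) (cpl a b) = Some (Q, [])" "rv 5 (cpl b a' @ U0) (cpl b a @ Q) = Some ([], [])"
          using cube_all[OF aa'(4) br(7) vb c3] cube_okE by blast
        obtain U' V' W1 where cl: "rv m [d] (cpl a' b) = Some (U', V')" "pos_equiv n q (V' @ W1)"
          "pos_equiv n W (U' @ W1)"
        proof -
          have W1': "pos_equiv n ([d] @ q) (cpl a' b @ W)" using W(1) by simp
          have ll: "length ([d] @ q) \<le> m" using lenq by simp
          show ?thesis using claim[OF P ll ll W1'] that by blast
        qed
        have UV: "U' = U0" "V' = V0" using rv_det[OF cl(1) cb(1)[unfolded aa'(3)]] by auto
        have pcv: "positive_word n (cpl x y)" if "valid_band n x" "valid_band n y" for x y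
          unfolding positive_word_def using cpl_valid[OF that] by blast
        have pw: "positive_word n [d]" "positive_word n (cpl a' b)" "positive_word n (cpl a b)"
           "positive_word n (cpl b a')" "positive_word n (cpl b a)"
          using br(9) unfolding positive_word_def apply simp
          using pcv[OF br(7) vb] pcv[OF aa'(4) vb] pcv[OF vb br(7)] pcv[OF vb aa'(4)] by (simp_all add: positive_word_def)
        have s1: "positive_word n U0" "positive_word n V0"
          using rv_sound[OF cl(1)[unfolded UV] pw(1,2)] by auto
        have pw2: "positive_word n (cpl a a' @ V0)" using s1 aa'(2) br(8) by (auto simp: positive_word_def)
        have s2: "positive_word n Q" "pos_equiv n ((cpl a a' @ V0) @ []) (cpl a b @ Q)"
          using rv_sound[OF cb(2) pw2 pw(3)] by auto
        have pw3: "positive_word n (cpl b a' @ U0)" "positive_word n (cpl b a @ Q)"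
          using s1 s2 pw by (auto simp: positive_word_def)
        have s3: "pos_equiv n ((cpl b a' @ U0) @ []) ((cpl b a @ Q) @ [])"
          using rv_sound[OF cb(3) pw3] by auto
        have "pos_equiv n X (c # V0 @ W1)" using aX(2) cl(2) UV pe_cons by simp
        also have "pos_equiv n ... (cpl a b @ Q @ W1)"
          using pe_appr[OF s2(2), of W1] aa'(2) by simp
        finally have x: "pos_equiv n X (cpl a b @ Q @ W1)" .
        have "pos_equiv n Y (cpl b a' @ U0 @ W1)"
          using pe_trans[OF W(2) pe_appl[OF cl(3), of "cpl b a'"]] UV by simp
        also have "pos_equiv n ... (cpl b a @ Q @ W1)"
          using pe_appr[OF s3, of W1] by simp
        finally show ?thesis unfolding CC_def using x False by blast
      qed
    qed
  qed
qed


lemma PP_all: "PP n m"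
proof (induction m rule: less_induct)
  case (less m)
  have P: "\<forall>m'<m. PP n m'" using less by blast
  show ?case unfolding PP_def
  proof (intro allI impI)
    fix a b X Y assume len: "length X = m" and e: "pos_equiv n (a # X) (b # Y)"
    have gen: "\<forall>a X. u = a # X \<longrightarrow> length X = m \<longrightarrow> CC n a X b Y" if "(pos_step n)\<^sup>*\<^sup>* u (b # Y)" for u
      using that
    proof (induction rule: converse_rtranclp_induct)
      case base
      then show ?case by (auto simp: CC_def)
    next
      case (step u u')
      show ?case
      proof (intro allI impI)
        fix a X assume h: "u = a # X" "length X = m"
        have r: "pos_equiv n u' (b # Y)" using step(2) unfolding pos_equiv_def .
        show "CC n a X b Y" using step_case[OF P step(1)[unfolded h(1)] r h(2) step(3)] .
      qed
    qed
    have "CC n a X b Y" using gen[OF e[unfolded pos_equiv_def]] len by blast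
    then show "(a = b \<longrightarrow> pos_equiv n X Y) \<and>
       (a \<noteq> b \<longrightarrow> (\<exists>W. pos_equiv n X (cpl a b @ W) \<and> pos_equiv n Y (cpl b a @ W)))"
      unfolding CC_def .
  qed
qed

lemma lcancel1: "pos_equiv n (a # X) (a # Y) \<Longrightarrow> pos_equiv n X Y"
  using PP_all[of n "length X", unfolded PP_def] by blast

lemma lcancel: "pos_equiv n (p @ X) (p @ Y) \<Longrightarrow> pos_equiv n X Y"
  by (induction p) (auto dest: lcancel1)


definition Dl :: "nat \<Rightarrow> nat \<Rightarrow> ch list" where
  "Dl h l = map (\<lambda>i. (Suc i, i)) (rev [l..<h])"

lemma Dl_empty: "h \<le> l \<Longrightarrow> Dl h l = []" by (simp add: Dl_def)

lemma Dl_snoc: "l < h \<Longrightarrow> Dl h l = Dl h (Suc l) @ [(Suc l, l)]"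
  unfolding Dl_def by (simp add: upt_rec)

lemma Dl_cons: "l < h \<Longrightarrow> Dl h l = (h, h - 1) # Dl (h - 1) l"
  unfolding Dl_def by (cases h) auto

lemma Dl_set: "x \<in> set (Dl h l) \<longleftrightarrow> (\<exists>i. l \<le> i \<and> i < h \<and> x = (Suc i, i))"
  unfolding Dl_def by auto

lemma Dl_valid: "1 \<le> l \<Longrightarrow> h \<le> n \<Longrightarrow> positive_word n (Dl h l)"
  unfolding positive_word_def valid_band_def by (auto simp: Dl_set)

lemma comm_word: "valid_band n g \<Longrightarrow> positive_word n w \<Longrightarrow> (\<forall>x\<in>set w. disj g x) \<Longrightarrow>
   pos_equiv n (g # w) (w @ [g])"
proof (induction w)
  case (Cons x w)
  have vx: "valid_band n x" "positive_word n w" using Cons.prems by (auto simp: positive_word_def)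
  have "pos_equiv n [g, x] [x, g]" using comm[of n "fst g" "snd g" "fst x" "snd x"] Cons.prems vx by auto
  then have "pos_equiv n (g # x # w) (x # g # w)" using pe_appr[of n "[g,x]" "[x,g]" w] by simp
  also have "pos_equiv n ... (x # w @ [g])" using pe_cons Cons vx by (auto simp: positive_word_def)
  finally show ?case by simp
qed simp

lemma pe2: "pos_equiv n [x, y] [x', y'] \<Longrightarrow> pos_equiv n (x # y # w) (x' # y' # w)"
  using pe_appr[of n "[x,y]" "[x',y']" w] by simp

lemma L1: "1 \<le> l \<Longrightarrow> l < h \<Longrightarrow> h \<le> n \<Longrightarrow> pos_equiv n (Dl h l) ((h, l) # Dl h (Suc l))"
proof (induction "h - l" arbitrary: l rule: less_induct)
  case less
  show ?case
  proof (cases "Suc l = h")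
    case True
    then show ?thesis by (simp add: Dl_snoc Dl_empty)
  next
    case False
    then have lt: "Suc l < h" using less.prems by simp
    have IH: "pos_equiv n (Dl h (Suc l)) ((h, Suc l) # Dl h (Suc (Suc l)))"
      using less.hyps[of "Suc l"] less.prems lt by simp
    have "pos_equiv n (Dl h l) (((h, Suc l) # Dl h (Suc (Suc l))) @ [(Suc l, l)])"
      using Dl_snoc[OF less.prems(2)] pe_appr[OF IH] by simp
    also have "pos_equiv n ... ((h, Suc l) # (Suc l, l) # Dl h (Suc (Suc l)))"
    proof -
      have "pos_equiv n ((Suc l, l) # Dl h (Suc (Suc l))) (Dl h (Suc (Suc l)) @ [(Suc l, l)])"
        using less.prems by (intro comm_word Dl_valid) (auto simp: valid_band_def Dl_set disj_def)
      then have "pos_equiv n (Dl h (Suc (Suc l)) @ [(Suc l, l)]) ((Suc l, l) # Dl h (Suc (Suc l)))" by (rule pe_sym)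
      then show ?thesis using pe_cons by fastforce
    qed
    also have "pos_equiv n ... ((h, l) # (h, Suc l) # Dl h (Suc (Suc l)))"
      by (rule pe2, rule tri1) (use less.prems lt in auto)
    also have "pos_equiv n ... ((h, l) # Dl h (Suc l))"
      using pe_cons[OF pe_sym[OF IH]] by simp
    finally show ?thesis .
  qed
qed

lemma L2: "1 \<le> l \<Longrightarrow> l < h \<Longrightarrow> h \<le> n \<Longrightarrow> pos_equiv n (Dl h l) (Dl (h - 1) l @ [(h, l)])"
proof (cases "h - 1 = l")
  case True
  assume "l < h"
  then show ?thesis using True by (simp add: Dl_cons Dl_empty)
next
  case False
  assume h: "1 \<le> l" "l < h" "h \<le> n"
  then have lt: "l < h - 1" using False by simp
  have "Dl h l = (h, h - 1) # Dl (h - 1) l" using Dl_cons h by simp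
  also have "pos_equiv n ... ((h, h - 1) # (h - 1, l) # Dl (h - 1) (Suc l))"
    using pe_cons[OF L1[OF h(1) lt]] h by simp
  also have "pos_equiv n ... ((h - 1, l) # (h, l) # Dl (h - 1) (Suc l))"
    by (rule pe2, rule tri2) (use h lt in auto)
  also have "pos_equiv n ... ((h - 1, l) # Dl (h - 1) (Suc l) @ [(h, l)])"
  proof -
    have "pos_equiv n ((h, l) # Dl (h - 1) (Suc l)) (Dl (h - 1) (Suc l) @ [(h, l)])"
      using h by (intro comm_word Dl_valid) (auto simp: valid_band_def Dl_set disj_def)
    then show ?thesis using pe_cons by fastforce
  qed
  also have "pos_equiv n ... (Dl (h - 1) l @ [(h, l)])"
    using pe_appr[OF pe_sym[OF L1[OF h(1) lt]], where q="[(h,l)]"] h by simp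
  finally show ?thesis .
qed

definition tau :: "nat \<Rightarrow> nat \<Rightarrow> ch \<Rightarrow> ch" where
  "tau h l g = (if l < snd g then (fst g - 1, snd g - 1) else (h, fst g - 1))"

lemma Qconj: "1 \<le> l \<Longrightarrow> l \<le> s \<Longrightarrow> s < t \<Longrightarrow> t \<le> h \<Longrightarrow> h \<le> n \<Longrightarrow>
  pos_equiv n (Dl h l @ [(t, s)]) (tau h l (t, s) # Dl h l)"
proof (induction "h - l" arbitrary: h l s t rule: less_induct)
  case less
  note pr = less.prems
  show ?case
  proof (cases "t < h")
    case True
    have hl: "l < h" using pr by simp
    have IH: "pos_equiv n (Dl (h - 1) l @ [(t, s)]) (tau (h - 1) l (t, s) # Dl (h - 1) l)"
      using less.hyps[of "h - 1" l s t] pr True by simp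
    have "Dl h l @ [(t, s)] = (h, h - 1) # Dl (h - 1) l @ [(t, s)]" using Dl_cons[OF hl] by simp
    also have "pos_equiv n ... ((h, h - 1) # tau (h - 1) l (t, s) # Dl (h - 1) l)"
      using pe_cons[OF IH] by simp
    also have "pos_equiv n ... (tau h l (t, s) # (h, h - 1) # Dl (h - 1) l)"
    proof (cases "l < s")
      case True
      then have e: "tau (h - 1) l (t, s) = (t - 1, s - 1)" "tau h l (t, s) = (t - 1, s - 1)" by (auto simp: tau_def)
      show ?thesis unfolding e
        by (rule pe2, rule comm) (use pr \<open>t < h\<close> True in \<open>auto simp: valid_band_def disj_def\<close>)
    next
      case False
      then have e: "tau (h - 1) l (t, s) = (h - 1, t - 1)" "tau h l (t, s) = (h, t - 1)" by (auto simp: tau_def)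
      show ?thesis unfolding e
        by (rule pe2, rule tri1) (use pr \<open>t < h\<close> False in auto)
    qed
    also have "... = tau h l (t, s) # Dl h l" using Dl_cons[OF hl] by simp
    finally show ?thesis .
  next
    case False
    then have th: "t = h" using pr by simp
    show ?thesis
    proof (cases "s = l")
      case True
      have hl: "l < h" using pr by simp
      have "Dl h l @ [(t, s)] = (h, h - 1) # Dl (h - 1) l @ [(h, l)]" using Dl_cons[OF hl] th True by simp
      also have "pos_equiv n ... ((h, h - 1) # Dl h l)"
        using pe_cons[OF pe_sym[OF L2[OF pr(1) hl pr(5)]]] by simp
      finally show ?thesis using th True hl by (simp add: tau_def)
    next
      case False
      then have ls: "l < s" using pr by simp
      have hl: "l < h" using pr by simp
      have IH: "pos_equiv n (Dl h (Suc l) @ [(h, s)]) (tau h (Suc l) (h, s) # Dl h (Suc l))"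
        using less.hyps[of h "Suc l" s h] pr th ls by simp
      have "pos_equiv n (Dl h l @ [(t, s)]) ((h, l) # Dl h (Suc l) @ [(h, s)])"
        using pe_appr[OF L1[OF pr(1) hl pr(5)], of "[(t,s)]"] th by simp
      also have "pos_equiv n ... ((h, l) # tau h (Suc l) (h, s) # Dl h (Suc l))"
        using pe_cons[OF IH] by simp
      also have "pos_equiv n ... (tau h l (t, s) # (h, l) # Dl h (Suc l))"
      proof (cases "Suc l < s")
        case True
        then have e: "tau h (Suc l) (h, s) = (h - 1, s - 1)" "tau h l (t, s) = (h - 1, s - 1)"
          using th ls by (auto simp: tau_def)
        show ?thesis unfolding e
          by (rule pe2, rule comm) (use pr th True in \<open>auto simp: valid_band_def disj_def\<close>)
      next
        case False
        then have sl: "s = Suc l" using ls by simp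
        then have e: "tau h (Suc l) (h, s) = (h, h - 1)" "tau h l (t, s) = (h - 1, l)"
          using th ls by (auto simp: tau_def)
        show ?thesis unfolding e
          by (rule pe2, rule tri3) (use pr th sl in auto)
      qed
      also have "pos_equiv n ... (tau h l (t, s) # Dl h l)"
        using pe_cons[OF pe_sym[OF L1[OF pr(1) hl pr(5)]]] by simp
      finally show ?thesis .
    qed
  qed
qed


definition dpow :: "nat \<Rightarrow> nat \<Rightarrow> ch list" where
  "dpow n k = concat (replicate k (Dl n 1))"

lemma dpow_Suc: "dpow n (Suc k) = Dl n 1 @ dpow n k" by (simp add: dpow_def)
lemma dpow_add: "dpow n (a + b) = dpow n a @ dpow n b" by (simp add: dpow_def replicate_add)
lemma dpow_valid: "positive_word n (dpow n k)"
  using Dl_valid[of 1 n n] by (auto simp: dpow_def positive_word_def)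

lemma tau_valid: "valid_band n g \<Longrightarrow> valid_band n (tau n 1 g)"
  by (cases g) (auto simp: tau_def valid_band_def)

lemma tau_pow_valid: "valid_band n g \<Longrightarrow> valid_band n ((tau n 1 ^^ k) g)"
proof (induction k)
  case (Suc k) then show ?case using tau_valid[of n "(tau n 1 ^^ k) g"] by simp
qed simp

lemma delta_conj: assumes "valid_band n g" shows "pos_equiv n (Dl n 1 @ [g]) (tau n 1 g # Dl n 1)"
proof (cases g)
  case (Pair t s)
  show ?thesis unfolding Pair by (rule Qconj) (use assms Pair in \<open>auto simp: valid_band_def\<close>)
qed

lemma dpow_conj: "valid_band n g \<Longrightarrow> pos_equiv n (dpow n k @ [g]) ((tau n 1 ^^ k) g # dpow n k)"
proof (induction k)
  case 0 then show ?case by (simp add: dpow_def)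
next
  case (Suc k)
  have "dpow n (Suc k) @ [g] = Dl n 1 @ (dpow n k @ [g])" by (simp add: dpow_Suc)
  also have "pos_equiv n ... (Dl n 1 @ ((tau n 1 ^^ k) g # dpow n k))"
    using pe_appl[OF Suc.IH[OF Suc.prems]] .
  also have "... = (Dl n 1 @ [(tau n 1 ^^ k) g]) @ dpow n k" by simp
  also have "pos_equiv n ... ((tau n 1 (((tau n 1) ^^ k) g) # Dl n 1) @ dpow n k)"
    using pe_appr[OF delta_conj[OF tau_pow_valid[OF Suc.prems]]] .
  also have "... = (tau n 1 ^^ Suc k) g # dpow n (Suc k)" by (simp add: dpow_Suc)
  finally show ?case .
qed

definition rk :: "nat \<Rightarrow> nat \<Rightarrow> nat \<Rightarrow> nat" where
  "rk n k x = (if k < x then x - k else x + n - k)"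

lemma rk_bounds: "1 \<le> x \<Longrightarrow> x \<le> n \<Longrightarrow> k \<le> n \<Longrightarrow> 1 \<le> rk n k x \<and> rk n k x \<le> n"
  by (auto simp: rk_def)

lemma rk_Suc: "1 \<le> x \<Longrightarrow> x \<le> n \<Longrightarrow> k < n \<Longrightarrow> rk n (Suc k) x = (if 1 < rk n k x then rk n k x - 1 else n)"
  by (auto simp: rk_def)

lemma rk_inj: "1 \<le> x \<Longrightarrow> x \<le> n \<Longrightarrow> 1 \<le> y \<Longrightarrow> y \<le> n \<Longrightarrow> k \<le> n \<Longrightarrow> x \<noteq> y \<Longrightarrow> rk n k x \<noteq> rk n k y"
  by (auto simp: rk_def split: if_splits)

lemma tau_pow: "valid_band n (t, s) \<Longrightarrow> k \<le> n \<Longrightarrow>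
  (tau n 1 ^^ k) (t, s) = (max (rk n k t) (rk n k s), min (rk n k t) (rk n k s))"
proof (induction k)
  case 0 then show ?case by (auto simp: rk_def valid_band_def)
next
  case (Suc k)
  have v: "1 \<le> t" "t \<le> n" "1 \<le> s" "s \<le> n" "s < t" using Suc.prems by (auto simp: valid_band_def)
  have k: "k < n" using Suc.prems by simp
  have IH: "(tau n 1 ^^ k) (t, s) = (max (rk n k t) (rk n k s), min (rk n k t) (rk n k s))"
    using Suc by simp
  define a where "a = rk n k t"
  define b where "b = rk n k s"
  have ab: "1 \<le> a" "a \<le> n" "1 \<le> b" "b \<le> n" "a \<noteq> b"
    using rk_bounds[OF v(1,2), of k] rk_bounds[OF v(3,4), of k] rk_inj[OF v(1,2,3,4), of k] k v(5)
    unfolding a_def b_def by auto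
  have s1: "rk n (Suc k) t = (if 1 < a then a - 1 else n)" "rk n (Suc k) s = (if 1 < b then b - 1 else n)"
    using rk_Suc[OF v(1,2) k] rk_Suc[OF v(3,4) k] unfolding a_def b_def by auto
  show ?case unfolding funpow.simps comp_def IH s1 a_def[symmetric] b_def[symmetric]
    using ab by (auto simp: tau_def max_def min_def)
qed

lemma tau_pow_n: "valid_band n g \<Longrightarrow> (tau n 1 ^^ n) g = g"
proof (cases g)
  case (Pair t s)
  assume v: "valid_band n g"
  have "rk n n t = t" "rk n n s = s" using v Pair by (auto simp: rk_def valid_band_def)
  then show ?thesis using tau_pow[of n t s n] v Pair by (auto simp: valid_band_def)
qed

definition Zw :: "nat \<Rightarrow> ch list" where "Zw n = dpow n n"

lemma Z_valid: "positive_word n (Zw n)" by (simp add: Zw_def dpow_valid)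

lemma Z_central1: "valid_band n g \<Longrightarrow> pos_equiv n (Zw n @ [g]) (g # Zw n)"
  using dpow_conj[of n g n] tau_pow_n[of n g] by (simp add: Zw_def)

lemma Z_central: "positive_word n w \<Longrightarrow> pos_equiv n (Zw n @ w) (w @ Zw n)"
proof (induction w)
  case (Cons g w)
  have v: "valid_band n g" "positive_word n w" using Cons.prems by (auto simp: positive_word_def)
  have "Zw n @ g # w = (Zw n @ [g]) @ w" by simp
  also have "pos_equiv n ... ((g # Zw n) @ w)" using pe_appr[OF Z_central1[OF v(1)]] .
  also have "pos_equiv n ... (g # w @ Zw n)" using pe_cons[OF Cons.IH[OF v(2)]] by simp
  finally show ?case by simp
qed simp

definition zp :: "nat \<Rightarrow> nat \<Rightarrow> ch list" where "zp n j = concat (replicate j (Zw n))"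

lemma zp_add: "zp n (a + b) = zp n a @ zp n b" by (simp add: zp_def replicate_add)
lemma zp_Suc: "zp n (Suc a) = Zw n @ zp n a" by (simp add: zp_def)
lemma zp_Suc': "zp n (Suc a) = zp n a @ Zw n"
  by (simp add: zp_def replicate_append_same[symmetric] del: replicate_append_same)

lemma zp_central: "positive_word n w \<Longrightarrow> pos_equiv n (zp n j @ w) (w @ zp n j)"
proof (induction j)
  case (Suc j)
  have "zp n (Suc j) @ w = Zw n @ (zp n j @ w)" by (simp add: zp_Suc)
  also have "pos_equiv n ... (Zw n @ (w @ zp n j))" using pe_appl[OF Suc.IH[OF Suc.prems]] .
  also have "... = (Zw n @ w) @ zp n j" by simp
  also have "pos_equiv n ... ((w @ Zw n) @ zp n j)" using pe_appr[OF Z_central[OF Suc.prems]] .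
  also have "... = w @ zp n (Suc j)" by (simp add: zp_Suc)
  finally show ?case .
qed (simp add: zp_def)

lemma div_aux: "m + 2 \<le> n \<Longrightarrow> \<exists>Y. positive_word n Y \<and> pos_equiv n (dpow n (Suc m)) ((n - m, n - m - 1) # Y)"
proof (induction m)
  case 0
  have "dpow n 1 = (n, n - 1) # Dl (n - 1) 1" using Dl_cons[of 1 n] 0 by (simp add: dpow_def)
  then show ?case using Dl_valid[of 1 "n - 1" n] by auto
next
  case (Suc m)
  obtain Y where Y: "positive_word n Y" "pos_equiv n (dpow n (Suc m)) ((n - m, n - m - 1) # Y)"
    using Suc by auto
  have vh: "valid_band n (n - m, n - m - 1)" using Suc.prems by (auto simp: valid_band_def)
  have "dpow n (Suc (Suc m)) = Dl n 1 @ dpow n (Suc m)" by (simp add: dpow_Suc)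
  also have "pos_equiv n ... ((Dl n 1 @ [(n - m, n - m - 1)]) @ Y)" using pe_appl[OF Y(2)] by simp
  also have "pos_equiv n ... ((tau n 1 (n - m, n - m - 1) # Dl n 1) @ Y)"
    using pe_appr[OF delta_conj[OF vh]] .
  also have "tau n 1 (n - m, n - m - 1) = (n - Suc m, n - Suc m - 1)"
    using Suc.prems by (auto simp: tau_def)
  finally have "pos_equiv n (dpow n (Suc (Suc m))) ((n - Suc m, n - Suc m - 1) # (Dl n 1 @ Y))" by simp
  moreover have "positive_word n (Dl n 1 @ Y)" using Y(1) Dl_valid[of 1 n n] by (auto simp: positive_word_def)
  ultimately show ?case by blast
qed

lemma A_div: "1 \<le> i \<Longrightarrow> i < n \<Longrightarrow> \<exists>E. positive_word n E \<and> pos_equiv n ((Suc i, i) # E) (Zw n)"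
proof -
  assume i: "1 \<le> i" "i < n"
  define m where "m = n - 1 - i"
  have m2: "m + 2 \<le> n" using i by (simp add: m_def)
  obtain Y where Y: "positive_word n Y" "pos_equiv n (dpow n (Suc m)) ((n - m, n - m - 1) # Y)"
    using div_aux[OF m2] by blast
  have e: "n - m = Suc i" "n - m - 1 = i" using i by (auto simp: m_def)
  have "Zw n = dpow n (Suc m) @ dpow n (n - Suc m)" unfolding Zw_def dpow_add[symmetric] using m2 by simp
  then have "pos_equiv n (Zw n) ((Suc i, i) # Y @ dpow n (n - Suc m))"
    using pe_appr[OF Y(2), of "dpow n (n - Suc m)"] e by simp
  moreover have "positive_word n (Y @ dpow n (n - Suc m))" using Y(1) dpow_valid[of n] by (auto simp: positive_word_def)
  ultimately show ?thesis using pe_sym by blast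
qed


definition Aw :: "nat \<Rightarrow> ch" where "Aw i = (Suc i, i)"

definition Ew :: "nat \<Rightarrow> nat \<Rightarrow> ch list" where
  "Ew n i = (SOME E. positive_word n E \<and> pos_equiv n (Aw i # E) (Zw n))"

lemma Ew_prop: "1 \<le> i \<Longrightarrow> i < n \<Longrightarrow> positive_word n (Ew n i) \<and> pos_equiv n (Aw i # Ew n i) (Zw n)"
  unfolding Ew_def using someI_ex[OF A_div[of i n]] by (simp add: Aw_def)

lemma Ew_prop2: assumes "1 \<le> i" "i < n" shows "pos_equiv n (Ew n i @ [Aw i]) (Zw n)"
proof -
  have e: "pos_equiv n (Aw i # Ew n i) (Zw n)" using Ew_prop[OF assms] by blast
  have v: "valid_band n (Aw i)" using assms by (simp add: Aw_def valid_band_def)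
  have "pos_equiv n (Aw i # (Ew n i @ [Aw i])) (Zw n @ [Aw i])" using pe_appr[OF e, of "[Aw i]"] by simp
  also have "pos_equiv n ... (Aw i # Zw n)" using Z_central1[OF v] .
  finally show ?thesis by (rule lcancel1)
qed

type_synonym st = "nat \<times> ch list"

definition act :: "nat \<Rightarrow> aletter \<Rightarrow> st \<Rightarrow> st" where
  "act n x s = (if valid_aletter n x then (if snd x then (fst s, snd s @ [Aw (fst x)])
      else (Suc (fst s), snd s @ Ew n (fst x))) else s)"

definition Phi :: "nat \<Rightarrow> aletter list \<Rightarrow> st \<Rightarrow> st" where
  "Phi n w s = fold (act n) w s"

definition simS :: "nat \<Rightarrow> st \<Rightarrow> st \<Rightarrow> bool" where
  "simS n s s' = (\<exists>j. pos_equiv n (zp n (fst s' + j) @ snd s) (zp n (fst s + j) @ snd s'))"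

lemma simS_refl: "simS n s s" unfolding simS_def by auto

lemma simS_sym: "simS n s s' \<Longrightarrow> simS n s' s" unfolding simS_def using pe_sym by blast

lemma simS_trans: assumes "simS n s1 s2" "simS n s2 s3" shows "simS n s1 s3"
proof -
  obtain k P m Q l R where s: "s1 = (k, P)" "s2 = (m, Q)" "s3 = (l, R)" by (cases s1; cases s2; cases s3) auto
  obtain j1 where j1: "pos_equiv n (zp n (m + j1) @ P) (zp n (k + j1) @ Q)" using assms(1) s by (auto simp: simS_def)
  obtain j2 where j2: "pos_equiv n (zp n (l + j2) @ Q) (zp n (m + j2) @ R)" using assms(2) s by (auto simp: simS_def)
  have "zp n (l + (m + j1 + j2)) @ P = zp n (l + j2) @ (zp n (m + j1) @ P)"
    by (simp add: zp_add[symmetric] add_ac)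
  also have "pos_equiv n ... (zp n (l + j2) @ (zp n (k + j1) @ Q))" using pe_appl[OF j1] .
  also have "... = zp n (k + j1) @ (zp n (l + j2) @ Q)" by (simp add: zp_add[symmetric] add_ac)
  also have "pos_equiv n ... (zp n (k + j1) @ (zp n (m + j2) @ R))" using pe_appl[OF j2] .
  also have "... = zp n (k + (m + j1 + j2)) @ R" by (simp add: zp_add[symmetric] add_ac)
  finally show ?thesis unfolding simS_def s by auto
qed

lemma act_resp: "simS n s s' \<Longrightarrow> simS n (act n x s) (act n x s')"
proof -
  assume h: "simS n s s'"
  obtain k P m Q where s: "s = (k, P)" "s' = (m, Q)" by (cases s; cases s') auto
  obtain j where j: "pos_equiv n (zp n (m + j) @ P) (zp n (k + j) @ Q)" using h s by (auto simp: simS_def)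
  show ?thesis
  proof (cases "valid_aletter n x")
    case False then show ?thesis using h by (simp add: act_def)
  next
    case True
    show ?thesis
    proof (cases "snd x")
      case True
      then show ?thesis using \<open>valid_aletter n x\<close> s pe_appr[OF j, of "[Aw (fst x)]"]
        by (auto simp: act_def simS_def)
    next
      case False
      have "pos_equiv n (zp n (Suc m + j) @ P @ Ew n (fst x)) (zp n (Suc k + j) @ Q @ Ew n (fst x))"
        using pe_appl[OF pe_appr[OF j, of "Ew n (fst x)"], of "Zw n"] by (simp add: zp_Suc)
      then show ?thesis using \<open>valid_aletter n x\<close> False s
        by (auto simp: act_def simS_def)
    qed
  qed
qed

lemma Phi_resp: "simS n s s' \<Longrightarrow> simS n (Phi n w s) (Phi n w s')"
  unfolding Phi_def
proof (induction w arbitrary: s s')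
  case (Cons x w) then show ?case using act_resp[OF Cons.prems, of x] by simp
qed simp

lemma Phi_append: "Phi n (u @ v) s = Phi n v (Phi n u s)" by (simp add: Phi_def)

lemma act_valid: "positive_word n (snd s) \<Longrightarrow> positive_word n (snd (act n x s))"
  unfolding act_def using Ew_prop[of "fst x" n]
  by (auto simp: positive_word_def valid_aletter_def Aw_def valid_band_def)

lemma Phi_valid: "positive_word n (snd s) \<Longrightarrow> positive_word n (snd (Phi n w s))"
  unfolding Phi_def
proof (induction w arbitrary: s)
  case (Cons x w) then show ?case using act_valid[OF Cons.prems, of x] by simp
qed simp

lemma braid3: "1 \<le> i \<Longrightarrow> Suc i < n \<Longrightarrow>
   pos_equiv n [Aw i, Aw (Suc i), Aw i] [Aw (Suc i), Aw i, Aw (Suc i)]"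
proof -
  assume i: "1 \<le> i" "Suc i < n"
  have "pos_equiv n [(Suc (Suc i), Suc i), (Suc i, i), (Suc (Suc i), Suc i)]
           [(Suc i, i), (Suc (Suc i), i), (Suc (Suc i), Suc i)]"
    using pe2[OF tri2[of i "Suc i" "Suc (Suc i)" n]] i by simp
  also have "pos_equiv n ... [(Suc i, i), (Suc (Suc i), Suc i), (Suc i, i)]"
    using pe_cons[OF pe_sym[OF tri1[of i "Suc i" "Suc (Suc i)" n]]] i by simp
  finally show ?thesis unfolding Aw_def by (rule pe_sym)
qed

lemma braid_Phi: "braid_eq n u v \<Longrightarrow> positive_word n (snd s) \<Longrightarrow> simS n (Phi n u s) (Phi n v s)"
proof (induction arbitrary: s rule: braid_eq.induct)
  case (refl w) show ?case by (rule simS_refl)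
next
  case (sym u v)
  have "simS n (Phi n u s) (Phi n v s)" using sym.IH[of s] sym.prems by simp
  then show ?case by (rule simS_sym)
next
  case (trans u v w)
  have "simS n (Phi n u s) (Phi n v s)" "simS n (Phi n v s) (Phi n w s)"
    using trans.IH[of s] trans.prems by simp_all
  then show ?case by (rule simS_trans)
next
  case (ctx u v p q)
  have "simS n (Phi n u (Phi n p s)) (Phi n v (Phi n p s))"
    using ctx.IH[of "Phi n p s"] Phi_valid[OF ctx.prems] by simp
  then show ?case unfolding Phi_append by (rule Phi_resp)
next
  case (cancel x)
  obtain k P where s: "s = (k, P)" by (cases s)
  obtain i b where x: "x = (i, b)" by (cases x)
  have i: "1 \<le> i" "i < n" using cancel.hyps x by (auto simp: valid_aletter_def)
  have vP: "positive_word n P" using cancel.prems s by simp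
  have "pos_equiv n (zp n k @ P @ Zw n) (zp n (Suc k) @ P)"
    using pe_appl[OF pe_sym[OF Z_central[OF vP]], of "zp n k"] by (simp add: zp_Suc')
  moreover have "pos_equiv n (zp n k @ P @ [Aw i] @ Ew n i) (zp n k @ P @ Zw n)"
    using pe_appl[OF conjunct2[OF Ew_prop[OF i]], of "zp n k @ P"] by simp
  moreover have "pos_equiv n (zp n k @ P @ Ew n i @ [Aw i]) (zp n k @ P @ Zw n)"
    using pe_appl[OF Ew_prop2[OF i], of "zp n k @ P"] by simp
  ultimately show ?case using cancel.hyps x s
    by (cases b) (auto simp: Phi_def act_def simS_def valid_aletter_def intro!: exI[of _ 0] intro: pe_trans)
next
  case (comm i j)
  obtain k P where s: "s = (k, P)" by (cases s)
  have "pos_equiv n [Aw i, Aw j] [Aw j, Aw i]" unfolding Aw_def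
    by (rule Submission.comm) (use comm.hyps in \<open>auto simp: valid_band_def disj_def\<close>)
  then have "pos_equiv n (zp n k @ P @ [Aw i, Aw j]) (zp n k @ P @ [Aw j, Aw i])"
    using pe_appl[of n _ _ "zp n k @ P"] by simp
  then show ?case using comm.hyps s
    by (auto simp: Phi_def act_def simS_def valid_aletter_def sg_def intro!: exI[of _ 0])
next
  case (braid i)
  obtain k P where s: "s = (k, P)" by (cases s)
  have "pos_equiv n (zp n k @ P @ [Aw i, Aw (Suc i), Aw i]) (zp n k @ P @ [Aw (Suc i), Aw i, Aw (Suc i)])"
    using pe_appl[OF braid3, of i n "zp n k @ P"] braid.hyps by simp
  then show ?case using braid.hyps s
    by (auto simp: Phi_def act_def simS_def valid_aletter_def sg_def intro!: exI[of _ 0])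
qed


lemma fold_sg: "(\<forall>i\<in>set is. 1 \<le> i \<and> i < n) \<Longrightarrow> Phi n (map sg is) (k, P) = (k, P @ map Aw is)"
  unfolding Phi_def
  by (induction "is" arbitrary: P) (auto simp: act_def sg_def valid_aletter_def)

lemma fold_sgi: "(\<forall>i\<in>set is. 1 \<le> i \<and> i < n) \<Longrightarrow>
   Phi n (map sgi is) (k, P) = (k + length is, P @ concat (map (Ew n) is))"
  unfolding Phi_def
  by (induction "is" arbitrary: k P) (auto simp: act_def sgi_def valid_aletter_def)

lemma DE: "1 \<le> l \<Longrightarrow> l \<le> h \<Longrightarrow> h \<le> n \<Longrightarrow>
   pos_equiv n (Dl h l @ concat (map (Ew n) [l..<h])) (zp n (h - l))"
proof (induction "h - l" arbitrary: l rule: less_induct)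
  case less
  show ?case
  proof (cases "l = h")
    case True then show ?thesis by (simp add: Dl_empty zp_def)
  next
    case False
    then have lh: "l < h" using less.prems by simp
    have IH: "pos_equiv n (Dl h (Suc l) @ concat (map (Ew n) [Suc l..<h])) (zp n (h - Suc l))"
      using less.hyps[of "Suc l"] less.prems lh by simp
    have E: "pos_equiv n (Aw l # Ew n l) (Zw n)" using Ew_prop[of l n] less.prems lh by simp
    have "Dl h l @ concat (map (Ew n) [l..<h]) = Dl h (Suc l) @ (Aw l # Ew n l) @ concat (map (Ew n) [Suc l..<h])"
      using Dl_snoc[OF lh] upt_rec[of l h] lh by (simp add: Aw_def)
    also have "pos_equiv n ... (Dl h (Suc l) @ Zw n @ concat (map (Ew n) [Suc l..<h]))"
      using pe_ctx[OF E] by simp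
    also have "pos_equiv n ... (Zw n @ Dl h (Suc l) @ concat (map (Ew n) [Suc l..<h]))"
      using pe_appr[OF pe_sym[OF Z_central[OF Dl_valid[of "Suc l" h n]]]] less.prems by simp
    also have "pos_equiv n ... (Zw n @ zp n (h - Suc l))" using pe_appl[OF IH] .
    also have "... = zp n (h - l)" using lh by (simp add: zp_Suc[symmetric] Suc_diff_Suc)
    finally show ?thesis .
  qed
qed

lemma band_Phi: assumes v: "valid_band n g" and vP: "positive_word n P"
  shows "simS n (Phi n (band_word g) (k, P)) (k, P @ [g])"
proof -
  obtain t s where g: "g = (t, s)" by (cases g)
  have ts: "1 \<le> s" "s < t" "t \<le> n" using v g by (auto simp: valid_band_def)
  have b: "band_word g = map sg (rev [Suc s..<t]) @ [sg s] @ map sgi [Suc s..<t]"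
    using g by (simp add: band_word_def)
  have p1: "Phi n (map sg (rev [Suc s..<t])) (k, P) = (k, P @ Dl t (Suc s))"
    using fold_sg[of "rev [Suc s..<t]" n k P] ts by (auto simp: Dl_def Aw_def)
  have p2: "Phi n [sg s] (k, P @ Dl t (Suc s)) = (k, P @ Dl t s)"
    using fold_sg[of "[s]" n k "P @ Dl t (Suc s)"] ts Dl_snoc[of s t] by (simp add: Aw_def)
  define m where "m = t - Suc s"
  have p3: "Phi n (map sgi [Suc s..<t]) (k, P @ Dl t s) = (k + m, P @ Dl t s @ concat (map (Ew n) [Suc s..<t]))"
    using fold_sgi[of "[Suc s..<t]" n k "P @ Dl t s"] ts by (simp add: m_def)
  have st: "Phi n (band_word g) (k, P) = (k + m, P @ Dl t s @ concat (map (Ew n) [Suc s..<t]))"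
    unfolding b Phi_append p1 p2 p3 ..
  have "pos_equiv n (Dl t s @ concat (map (Ew n) [Suc s..<t])) ((t, s) # Dl t (Suc s) @ concat (map (Ew n) [Suc s..<t]))"
    using pe_appr[OF L1[OF ts(1,2,3)]] by simp
  also have "pos_equiv n ... ((t, s) # zp n m)"
    using pe_cons[OF DE[of "Suc s" t n]] ts by (simp add: m_def)
  finally have e1: "pos_equiv n (zp n k @ P @ Dl t s @ concat (map (Ew n) [Suc s..<t])) (zp n k @ (P @ [g]) @ zp n m)"
    using pe_appl[of n _ _ "zp n k @ P"] g by simp
  have vPg: "positive_word n (P @ [g])" using vP v by (simp add: positive_word_def)
  have e2: "pos_equiv n (zp n k @ (P @ [g]) @ zp n m) (zp n (k + m) @ P @ [g])"
    using pe_appl[OF pe_sym[OF zp_central[OF vPg]], of "zp n k"] by (simp add: zp_add)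
  show ?thesis unfolding st simS_def using pe_trans[OF e1 e2] by (auto intro!: exI[of _ 0])
qed

lemma word_Phi: "positive_word n V \<Longrightarrow> positive_word n P \<Longrightarrow>
  simS n (Phi n (band_to_artin V) (k, P)) (k, P @ V)"
proof (induction V arbitrary: P)
  case Nil then show ?case by (simp add: band_to_artin_def Phi_def simS_refl)
next
  case (Cons g V)
  have v: "valid_band n g" "positive_word n V" using Cons.prems by (auto simp: positive_word_def)
  have vPg: "positive_word n (P @ [g])" using Cons.prems v by (simp add: positive_word_def)
  have ba: "band_to_artin (g # V) = band_word g @ band_to_artin V" by (simp add: band_to_artin_def)
  have "simS n (Phi n (band_to_artin V) (Phi n (band_word g) (k, P))) (Phi n (band_to_artin V) (k, P @ [g]))"
    by (rule Phi_resp[OF band_Phi[OF v(1) Cons.prems(2)]])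
  moreover have "simS n (Phi n (band_to_artin V) (k, P @ [g])) (k, P @ [g] @ V)"
    using Cons.IH[OF v(2) vPg] by simp
  ultimately show ?case unfolding ba Phi_append by (auto intro: simS_trans)
qed

theorem theorem2p6:
  fixes n :: nat and V W :: "(nat \<times> nat) list"
  assumes "positive_word n V" and "positive_word n W"
    and "braid_eq n (band_to_artin V) (band_to_artin W)"
  shows "pos_equiv n V W"
proof -
  have p0: "positive_word n []" by (simp add: positive_word_def)
  have s1: "simS n (Phi n (band_to_artin V) (0, [])) (Phi n (band_to_artin W) (0, []))"
    using braid_Phi[OF assms(3), of "(0, [])"] p0 by simp
  have s2: "simS n (Phi n (band_to_artin V) (0, [])) (0, V)" using word_Phi[OF assms(1) p0, of 0] by simp
  have s3: "simS n (Phi n (band_to_artin W) (0, [])) (0, W)" using word_Phi[OF assms(2) p0, of 0] by simp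
  have "simS n (0, V) (0, W)" using simS_trans[OF simS_trans[OF simS_sym[OF s2] s1] s3] .
  then obtain j where "pos_equiv n (zp n j @ V) (zp n j @ W)" unfolding simS_def by auto
  then show ?thesis by (rule lcancel)
qed


end
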